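(* Let $n>1$ be an integer with prime factorization $n=\prod_{i=1}^{\ell}p_i^{a_i}$, where $p_1<p_2<\cdots<p_\ell$ are primes, each $a_i\ge1$, and $a_\ell=1$. Suppose that \[ p_i-1=\prod_{j=1}^{i-1}p_j^{a_j}\quad\text{for }1\le i<\ell, \] and that $p_\ell+1=n/p_\ell$. Then $n$ is a prime power Giuga number.
   Context: A prime power Giuga number is a composite positive integer $n$ such that $\sum_{p^k\mid n}\frac{1}{p^k}-\frac1n$ is a positive integer, where the sum ranges over all prime powers $p^k$ ($p$ prime, $k\ge1$) dividing $n$. *)

theory Defs
  imports "HOL-Number_Theory.Number_Theory"
begin

definition pp_giuga :: "nat \<Rightarrow> bool" where
  "pp_giuga n \<longleftrightarrow> n > 1 \<and> \<not> prime n \<and>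
     (\<exists>m::int. m > 0 \<and>
        (\<Sum>q\<in>{q. primepow q \<and> q dvd n}. 1 / real q) - 1 / real n = real_of_int m)"

end

theory Submission imports Defs begin

definition T :: "nat \<Rightarrow> real" where
  "T m = (\<Sum>q\<in>{q. primepow q \<and> q dvd m}. 1 / real q)"

lemma set_split:
  fixes m p a :: nat
  assumes "prime p" "coprime p m" "m > 0"
  shows "{q. primepow q \<and> q dvd m * p ^ a} = {q. primepow q \<and> q dvd m} \<union> (\<lambda>k. p ^ k) ` {1..a}"
proof (rule equalityI; rule subsetI)
  fix q assume "q \<in> {q. primepow q \<and> q dvd m * p ^ a}"
  then obtain r k where r: "prime r" "k > 0" "q = r ^ k" and d: "r ^ k dvd m * p ^ a"
    by (auto simp: primepow_def)
  show "q \<in> {q. primepow q \<and> q dvd m} \<union> (\<lambda>k. p ^ k) ` {1..a}"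
  proof (cases "r = p")
    case True
    have "coprime (p ^ k) m" using assms(2) by simp
    hence "p ^ k dvd p ^ a" using d True
      using coprime_dvd_mult_right_iff[of "p ^ k" m "p ^ a"] by simp
    moreover have "p \<ge> 2" using assms(1) prime_ge_2_nat by blast
    ultimately have "k \<le> a" using dvd_power_iff_le[of p k a] by simp
    hence "k \<in> {1..a}" using r(2) by simp
    hence "q \<in> (\<lambda>k. p ^ k) ` {1..a}" using r(3) True by (intro image_eqI[of q _ k]) simp_all
    thus ?thesis by (rule UnI2)
  next
    case False
    have "coprime r p" using False r(1) assms(1) by (simp add: primes_coprime)
    hence "coprime (r ^ k) (p ^ a)" by simp
    hence "r ^ k dvd m" using d coprime_dvd_mult_left_iff[of "r ^ k" "p ^ a" m] by simp
    moreover have "primepow q" unfolding primepow_def using r by blast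
    ultimately show ?thesis using r(3) by simp
  qed
next
  fix q assume "q \<in> {q. primepow q \<and> q dvd m} \<union> (\<lambda>k. p ^ k) ` {1..a}"
  thus "q \<in> {q. primepow q \<and> q dvd m * p ^ a}"
  proof
    assume "q \<in> {q. primepow q \<and> q dvd m}" thus ?thesis by auto
  next
    assume "q \<in> (\<lambda>k. p ^ k) ` {1..a}"
    then obtain k where k: "1 \<le> k" "k \<le> a" "q = p ^ k" by auto
    have "primepow q" unfolding primepow_def using k assms(1) by (intro exI[of _ p] exI[of _ k]) simp
    moreover have "q dvd m * p ^ a" using k by (simp add: le_imp_power_dvd)
    ultimately show ?thesis by auto
  qed
qed

lemma T_step:
  fixes m p a :: nat
  assumes "prime p" "coprime p m" "m > 0"
  shows "T (m * p ^ a) = T m + (\<Sum>k=1..a. 1 / real p ^ k)"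
proof -
  have fin: "finite {q. primepow q \<and> q dvd m}"
    by (rule finite_subset[of _ "{..m}"]) (auto simp: dvd_imp_le assms(3))
  have disj: "{q. primepow q \<and> q dvd m} \<inter> (\<lambda>k. p ^ k) ` {1..a} = {}"
  proof (rule ccontr)
    assume "\<not> ?thesis"
    then obtain k where "k \<ge> 1" "p ^ k dvd m" by auto
    moreover have "p dvd p ^ k" using \<open>k \<ge> 1\<close> by (simp add: dvd_power)
    ultimately have "p dvd m" using dvd_trans by blast
    hence "p = 1" using coprime_common_divisor_nat[OF assms(2) dvd_refl] by simp
    thus False using assms(1) by simp
  qed
  have inj: "inj_on (\<lambda>k. p ^ k) {1..a}"
    using assms(1) prime_gt_1_nat by (auto intro!: inj_onI simp: power_inject_exp)
  have "T (m * p ^ a) = T m + (\<Sum>q\<in>(\<lambda>k. p ^ k) ` {1..a}. 1 / real q)"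
    unfolding T_def set_split[OF assms] by (rule sum.union_disjoint[OF fin _ disj]) auto
  also have "(\<Sum>q\<in>(\<lambda>k. p ^ k) ` {1..a}. 1 / real q) = (\<Sum>k=1..a. 1 / real p ^ k)"
    by (subst sum.reindex[OF inj]) simp
  finally show ?thesis .
qed

lemma geom:
  fixes p :: real assumes "p > 1"
  shows "(\<Sum>k=1..a. 1 / p ^ k) * (p - 1) = 1 - 1 / p ^ a"
proof (induction a)
  case 0 thus ?case by simp
next
  case (Suc a)
  have "(\<Sum>k=1..Suc a. 1 / p ^ k) = (\<Sum>k=1..a. 1 / p ^ k) + 1 / p ^ Suc a" by simp
  hence "(\<Sum>k=1..Suc a. 1 / p ^ k) * (p - 1) = 1 - 1 / p ^ a + (p - 1) / p ^ Suc a"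
    using Suc by (simp add: distrib_right)
  also have "\<dots> = 1 - 1 / p ^ Suc a" using assms by (simp add: field_simps)
  finally show ?case .
qed


theorem lemma4:
  fixes n l :: nat and p a :: "nat \<Rightarrow> nat"
  assumes "n > 1"
    and "n = (\<Prod>i=1..l. p i ^ a i)"
    and "\<forall>i\<in>{1..l}. prime (p i)"
    and "\<forall>i\<in>{1..l}. \<forall>j\<in>{1..l}. i < j \<longrightarrow> p i < p j"
    and "\<forall>i\<in>{1..l}. a i \<ge> 1"
    and "a l = 1"
    and "\<forall>i\<in>{1..<l}. p i - 1 = (\<Prod>j=1..<i. p j ^ a j)"
    and "p l + 1 = n div p l"
  shows "pp_giuga n"
proof -
  define N where "N i = (\<Prod>j=1..<i. p j ^ a j)" for i
  have l1: "l \<ge> 1"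
  proof (rule ccontr)
    assume "\<not> l \<ge> 1" hence "l = 0" by simp
    thus False using assms(1,2) by simp
  qed
  have Npos: "N i > 0" if "i \<le> l" for i
    unfolding N_def using assms(3) that
    by (intro prod_pos) (auto intro: prime_gt_0_nat)
  have IH: "T (N i) = 1 - 1 / real (N i)" if "1 \<le> i" "i \<le> l" for i
    using that
  proof (induction i rule: dec_induct)
    case base
    have "N 1 = 1" unfolding N_def by simp
    moreover have "{q. primepow q \<and> q dvd (1::nat)} = {}" using primepow_gt_Suc_0 by fastforce
    hence "T 1 = 0" unfolding T_def by simp
    ultimately show ?case by simp
  next
    case (step i)
    have il: "i < l" using step by simp
    have pr: "prime (p i)" using assms(3) step il by auto
    have p2: "p i \<ge> 2" using pr prime_ge_2_nat by blast
    have "p i - 1 = N i" using assms(7) step il unfolding N_def by simp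
    hence pN: "p i = N i + 1" using p2 by linarith
    have cop: "coprime (p i) (N i)" using pN by simp
    have NS: "N (Suc i) = N i * p i ^ a i"
      unfolding N_def using step by (simp add: prod.atLeastLessThan_Suc)
    have T1: "T (N (Suc i)) = T (N i) + (\<Sum>k=1..a i. 1 / real (p i) ^ k)"
      unfolding NS by (rule T_step[OF pr cop Npos]) (use il in auto)
    have g: "(\<Sum>k=1..a i. 1 / real (p i) ^ k) * (real (p i) - 1) = 1 - 1 / real (p i) ^ a i"
      by (rule geom) (use p2 in auto)
    have rp: "real (p i) - 1 = real (N i)" using pN by simp
    have Ni: "real (N i) > 0" using Npos il by simp
    have S: "(\<Sum>k=1..a i. 1 / real (p i) ^ k) = (1 - 1 / real (p i) ^ a i) / real (N i)"
      using g rp Ni by (simp add: field_simps)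
    have "T (N (Suc i)) = 1 - 1 / real (N i) + (1 - 1 / real (p i) ^ a i) / real (N i)"
      using T1 S step by simp
    also have "\<dots> = 1 - 1 / real (N (Suc i))"
      unfolding NS using Ni p2 by (simp add: field_simps)
    finally show ?case .
  qed
  have nN: "n = N l * p l"
  proof -
    have "n = (\<Prod>i=1..<Suc l. p i ^ a i)" using assms(2) atLeastLessThanSuc_atLeastAtMost by simp
    also have "\<dots> = N l * p l ^ a l" unfolding N_def using l1 by (simp add: prod.atLeastLessThan_Suc)
    finally show ?thesis using assms(6) by simp
  qed
  have prl: "prime (p l)" using assms(3) l1 by auto
  have p2: "p l \<ge> 2" using prl prime_ge_2_nat by blast
  have Nl: "N l = p l + 1" using assms(8) nN p2 by simp
  have cop: "coprime (p l) (N l)" using Nl by simp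
  have Tn: "T n = T (N l) + 1 / real (p l)"
    using T_step[OF prl cop Npos[OF order_refl], of 1] nN by simp
  have rn: "real n = (real (p l) + 1) * real (p l)" using nN Nl by (simp add: algebra_simps)
  have Tn2: "T n = 1 - 1 / (real (p l) + 1) + 1 / real (p l)"
    using Tn IH[OF l1 order_refl] Nl by simp
  have alg: "(1 - 1 / (x + 1) + 1 / x) - 1 / ((x + 1) * x) = 1" if "x \<ge> 2" for x :: real
  proof -
    have "x \<noteq> 0" "x + 1 \<noteq> 0" "x + x * x \<noteq> 0" "(x + 1) * x \<noteq> 0" using that by (auto, smt (verit) mult_nonneg_nonneg)
    have e1: "1 / (x + 1) + 1 / ((x + 1) * x) = 1 / (x + 1) * (1 + 1 / x)"
      by (simp add: distrib_left)
    have e2: "1 + 1 / x = (x + 1) / x" using \<open>x \<noteq> 0\<close> by (simp add: field_simps)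
    have e3: "1 / (x + 1) * ((x + 1) / x) = 1 / x" using \<open>x + 1 \<noteq> 0\<close> by simp
    have "1 / (x + 1) + 1 / ((x + 1) * x) = 1 / x" using e1 e2 e3 by simp
    thus ?thesis by linarith
  qed
  have val: "T n - 1 / real n = 1"
    unfolding Tn2 rn by (rule alg) (use p2 in simp)
  have np: "\<not> prime n"
  proof
    assume "prime n"
    hence "N l = 1 \<or> p l = 1" using nN prime_product by blast
    thus False using Nl p2 by simp
  qed
  have "(\<Sum>q\<in>{q. primepow q \<and> q dvd n}. 1 / real q) - 1 / real n = real_of_int 1"
    using val unfolding T_def by simp
  hence "\<exists>m::int. m > 0 \<and> (\<Sum>q\<in>{q. primepow q \<and> q dvd n}. 1 / real q) - 1 / real n = real_of_int m"
    by (intro exI[of _ 1]) simp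
  thus ?thesis unfolding pp_giuga_def using assms(1) np by blast
qed

end
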